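(* Let $n\ge 2$, $T\ge\log n$, $\nu\le 1$, and $\eta=\sqrt{\log(n)/T}$. Consider the following process (Hedge with noisy losses). Set $w^{(1)}_i=1$ for all $i\in[n]$. For $t=1,\dots,T$: output the distribution $p^{(t)}$ on $[n]$ with $p^{(t)}_i=w^{(t)}_i/\sum_j w^{(t)}_j$; then a random loss vector $\hat m^{(t)}\in\mathbb R^n$ is revealed; set $w^{(t+1)}_i=w^{(t)}_i\exp(-\eta\hat m^{(t)}_i)$. Let $m^{(t)}=\mathbb E[\hat m^{(t)}\mid \hat m^{(1)},\dots,\hat m^{(t-1)}]$, and suppose that for every $t$: $m^{(t)}\in[-1,1]^n$, and conditioned on $\hat m^{(1)},\dots,\hat m^{(t-1)}$, each coordinate of $\hat m^{(t)}-m^{(t)}$ is sub-Gaussian with variance proxy $\nu^2$ (i.e. $\mathbb E[\exp(s(\hat m^{(t)}_i-m^{(t)}_i))\mid\text{past}]\le\exp(s^2\nu^2/2)$ for all real $s$). Then for every $i\in[n]$, $$\mathbb E\Big[\sum_{t=1}^T\langle m^{(t)},p^{(t)}\rangle\Big]\le \mathbb E\Big[\sum_{t=1}^T m^{(t)}_i\Big]+4\sqrt{T\log n}.$$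
   Context: $\log$ is the natural logarithm and $[n]=\{1,\dots,n\}$. *)

theory Defs
  imports "HOL-Probability.Probability"
begin

text \<open>Rounds are indexed t = 1,2,...; experts are indexed i in {1..n}.
  A loss process is mh :: nat => nat => 'a => real, where mh t i is the
  random variable hat m^(t)_i on the probability space M.\<close>

definition past_sigma :: "'a measure \<Rightarrow> nat \<Rightarrow> (nat \<Rightarrow> nat \<Rightarrow> 'a \<Rightarrow> real) \<Rightarrow> nat \<Rightarrow> 'a measure" where
  "past_sigma M n mh t = sigma (space M)
     {mh s i -` A \<inter> space M | s i A. 1 \<le> s \<and> s < t \<and> i \<in> {1..n} \<and> A \<in> sets borel}"

definition cond_mean :: "'a measure \<Rightarrow> nat \<Rightarrow> (nat \<Rightarrow> nat \<Rightarrow> 'a \<Rightarrow> real) \<Rightarrow> nat \<Rightarrow> nat \<Rightarrow> 'a \<Rightarrow> real" where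
  "cond_mean M n mh t i = real_cond_exp M (past_sigma M n mh t) (mh t i)"

text \<open>Hedge weights: w^(1)_i = 1, w^(t+1)_i = w^(t)_i * exp(-eta * hat m^(t)_i) for t >= 1.
  (The value at t = 0 is irrelevant.)\<close>
primrec hedge_w :: "real \<Rightarrow> (nat \<Rightarrow> nat \<Rightarrow> 'a \<Rightarrow> real) \<Rightarrow> nat \<Rightarrow> nat \<Rightarrow> 'a \<Rightarrow> real" where
  "hedge_w eta mh 0 i x = 1"
| "hedge_w eta mh (Suc t) i x =
     (if t = 0 then 1 else hedge_w eta mh t i x * exp (- eta * mh t i x))"

definition hedge_p :: "nat \<Rightarrow> real \<Rightarrow> (nat \<Rightarrow> nat \<Rightarrow> 'a \<Rightarrow> real) \<Rightarrow> nat \<Rightarrow> nat \<Rightarrow> 'a \<Rightarrow> real" where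
  "hedge_p n eta mh t i x = hedge_w eta mh t i x / (\<Sum>j\<in>{1..n}. hedge_w eta mh t j x)"

end

theory Submission imports Defs begin

lemma exp_quad_bound:
  fixes x :: real assumes "\<bar>x\<bar> \<le> 1" shows "exp x \<le> 1 + x + x\<^sup>2"
proof (cases "x \<ge> 0")
  case True thus ?thesis using exp_bound assms by auto
next
  case False
  define y where "y = -x"
  have y: "0 \<le> y" "y \<le> 1" using False assms by (auto simp: y_def)
  have "exp y \<ge> 1 + y" by (rule exp_ge_add_one_self)
  have "(1 + y) * (1 - y + y\<^sup>2) \<ge> 1" using y by (simp add: algebra_simps power2_eq_square power3_eq_cube[symmetric])
  hence "1 / (1 + y) \<le> 1 - y + y\<^sup>2" using y by (simp add: field_simps)
  moreover have "exp x = 1 / exp y" by (simp add: y_def exp_minus field_simps)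
  moreover have "1 / exp y \<le> 1 / (1 + y)" using \<open>exp y \<ge> 1 + y\<close> y by (intro divide_left_mono) auto
  ultimately have "exp x \<le> 1 - y + y\<^sup>2" by linarith
  thus ?thesis by (simp add: y_def)
qed

lemma step_real:
  fixes J :: "nat set" and w mh m :: "nat \<Rightarrow> real" and \<eta> a :: real
  assumes J: "finite J" "J \<noteq> {}" and w: "\<And>j. j\<in>J \<Longrightarrow> w j > 0"
    and m: "\<And>j. j\<in>J \<Longrightarrow> \<bar>m j\<bar> \<le> 1" and eta: "0 \<le> \<eta>" "\<eta> \<le> 1"
  shows "ln (\<Sum>j\<in>J. w j * exp (- \<eta> * mh j)) - ln (\<Sum>j\<in>J. w j)
     \<le> a + \<eta>\<^sup>2 - \<eta> * (\<Sum>j\<in>J. m j * (w j / (\<Sum>k\<in>J. w k)))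
       + (\<Sum>j\<in>J. (w j * exp (- \<eta> * m j) / (exp a * (\<Sum>k\<in>J. w k * exp (- \<eta> * m k))))
                 * exp ((- \<eta>) * (mh j - m j))) - 1"
proof -
  define W where "W = (\<Sum>k\<in>J. w k)"
  define S where "S = (\<Sum>k\<in>J. w k * exp (- \<eta> * m k))"
  define Y where "Y = (\<Sum>j\<in>J. (w j * exp (- \<eta> * m j) / (exp a * S)) * exp ((- \<eta>) * (mh j - m j)))"
  have Wpos: "W > 0" unfolding W_def using J w by (intro sum_pos) auto
  have Spos: "S > 0" unfolding S_def using J w by (intro sum_pos) auto
  have Ypos: "Y > 0" unfolding Y_def using J w Spos by (intro sum_pos) auto
  have "(\<Sum>j\<in>J. w j * exp (- \<eta> * mh j)) = exp a * S * Y"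
    unfolding Y_def sum_distrib_left
  proof (rule sum.cong[OF refl])
    fix j assume "j \<in> J"
    have "exp (- \<eta> * mh j) = exp (- \<eta> * m j) * exp ((- \<eta>) * (mh j - m j))"
      by (simp add: exp_add[symmetric] algebra_simps)
    thus "w j * exp (- \<eta> * mh j) = exp a * S * (w j * exp (- \<eta> * m j) / (exp a * S) * exp (- \<eta> * (mh j - m j)))"
      using Spos by (simp add: field_simps)
  qed
  hence lnW': "ln (\<Sum>j\<in>J. w j * exp (- \<eta> * mh j)) = a + ln S + ln Y"
    using Spos Ypos by (simp add: ln_mult)
  have lnY: "ln Y \<le> Y - 1" using Ypos by (rule ln_le_minus_one)
  have "ln S - ln W = ln (S / W)" using Spos Wpos by (simp add: ln_div)
  also have "\<dots> \<le> S / W - 1" using Spos Wpos by (intro ln_le_minus_one) auto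
  also have "S / W \<le> (\<Sum>j\<in>J. w j * (1 - \<eta> * m j + \<eta>\<^sup>2)) / W"
    unfolding S_def
  proof (intro divide_right_mono sum_mono)
    fix j assume j: "j \<in> J"
    have "\<bar>- \<eta> * m j\<bar> \<le> 1" using m[OF j] eta by (simp add: abs_mult mult_le_one)
    hence "exp (- \<eta> * m j) \<le> 1 + (- \<eta> * m j) + (- \<eta> * m j)\<^sup>2" by (rule exp_quad_bound)
    also have "(- \<eta> * m j)\<^sup>2 \<le> \<eta>\<^sup>2"
    proof -
      have "(m j)\<^sup>2 \<le> 1" using m[OF j] by (simp add: abs_le_square_iff[of "m j" 1, simplified] )
      hence "\<eta>\<^sup>2 * (m j)\<^sup>2 \<le> \<eta>\<^sup>2 * 1" by (intro mult_left_mono) auto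
      thus ?thesis by (simp add: power_mult_distrib)
    qed
    finally show "w j * exp (- \<eta> * m j) \<le> w j * (1 - \<eta> * m j + \<eta>\<^sup>2)"
      using w[OF j] by (intro mult_left_mono) auto
  qed (use Wpos in auto)
  also have "(\<Sum>j\<in>J. w j * (1 - \<eta> * m j + \<eta>\<^sup>2)) / W = 1 + \<eta>\<^sup>2 - \<eta> * (\<Sum>j\<in>J. m j * (w j / W))"
  proof -
    define A where "A = (\<Sum>j\<in>J. m j * w j)"
    have "(\<Sum>j\<in>J. w j * (1 - \<eta> * m j + \<eta>\<^sup>2)) = (\<Sum>j\<in>J. (1 + \<eta>\<^sup>2) * w j - \<eta> * (m j * w j))"
      by (rule sum.cong) (auto simp: algebra_simps)
    also have "\<dots> = (1 + \<eta>\<^sup>2) * W - \<eta> * A"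
      unfolding sum_subtractf sum_distrib_left[symmetric] W_def A_def by simp
    finally have e1: "(\<Sum>j\<in>J. w j * (1 - \<eta> * m j + \<eta>\<^sup>2)) = (1 + \<eta>\<^sup>2) * W - \<eta> * A" .
    have e2: "(\<Sum>j\<in>J. m j * (w j / W)) = A / W"
      unfolding A_def by (simp add: sum_divide_distrib)
    show ?thesis unfolding e1 e2 using Wpos by (simp add: field_simps)
  qed
  finally have "ln S - ln W \<le> \<eta>\<^sup>2 - \<eta> * (\<Sum>j\<in>J. m j * (w j / W))" by simp
  thus ?thesis using lnW' lnY unfolding W_def[symmetric] S_def[symmetric] Y_def[symmetric] by linarith
qed

lemma past_sigma_space[simp]: "space (past_sigma M n mh t) = space M"
  unfolding past_sigma_def by (simp add: space_measure_of_conv)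

lemma past_sigma_sets: "sets (past_sigma M n mh t) = sigma_sets (space M)
     {mh s i -` A \<inter> space M | s i A. 1 \<le> s \<and> s < t \<and> i \<in> {1..n} \<and> A \<in> sets borel}"
  unfolding past_sigma_def by (rule sets_measure_of) auto

lemma past_sigma_subalg:
  assumes "\<And>s i. 1 \<le> s \<Longrightarrow> s < t \<Longrightarrow> i \<in> {1..n} \<Longrightarrow> mh s i \<in> borel_measurable M"
  shows "subalgebra M (past_sigma M n mh t)"
  unfolding subalgebra_def
proof (intro conjI)
  show "sets (past_sigma M n mh t) \<subseteq> sets M"
    unfolding past_sigma_sets
  proof (rule sets.sigma_sets_subset)
    show "{mh s i -` A \<inter> space M |s i A. 1 \<le> s \<and> s < t \<and> i \<in> {1..n} \<and> A \<in> sets borel} \<subseteq> sets M"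
      using assms measurable_sets by blast
  qed
qed simp

lemma mh_past_meas:
  assumes "1 \<le> s" "s < t" "i \<in> {1..n}"
  shows "mh s i \<in> borel_measurable (past_sigma M n mh t)"
proof (rule measurableI)
  fix A :: "real set" assume "A \<in> sets borel"
  hence "mh s i -` A \<inter> space M \<in> {mh s i -` A \<inter> space M | s i A. 1 \<le> s \<and> s < t \<and> i \<in> {1..n} \<and> A \<in> sets borel}"
    using assms by blast
  thus "mh s i -` A \<inter> space (past_sigma M n mh t) \<in> sets (past_sigma M n mh t)"
    unfolding past_sigma_sets by auto
qed simp

lemma hedge_w_past_meas:
  assumes "1 \<le> t" "t \<le> t'" "j \<in> {1..n}"
  shows "hedge_w eta mh t j \<in> borel_measurable (past_sigma M n mh t')"
  using assms
proof (induction t)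
  case 0 then show ?case by simp
next
  case (Suc t)
  show ?case
  proof (cases "t = 0")
    case True then show ?thesis by simp
  next
    case False
    have [measurable]: "hedge_w eta mh t j \<in> borel_measurable (past_sigma M n mh t')"
      using Suc False by auto
    have [measurable]: "mh t j \<in> borel_measurable (past_sigma M n mh t')"
      using Suc False by (intro mh_past_meas) auto
    show ?thesis using False by simp
  qed
qed

lemma hedge_w_pos: "hedge_w eta mh t j x > 0"
  by (induction t) auto

lemma hedge_w_final: "hedge_w eta mh (Suc T) i x = exp (- eta * (\<Sum>t\<in>{1..T}. mh t i x))"
proof (induction T)
  case 0 then show ?case by simp
next
  case (Suc T)
  have "hedge_w eta mh (Suc (Suc T)) i x = hedge_w eta mh (Suc T) i x * exp (- eta * mh (Suc T) i x)" by simp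
  also have "\<dots> = exp (- eta * (\<Sum>t\<in>{1..T}. mh t i x)) * exp (- eta * mh (Suc T) i x)" using Suc by simp
  also have "\<dots> = exp (- eta * (\<Sum>t\<in>{1..T}. mh t i x) + - eta * mh (Suc T) i x)" by (rule exp_add[symmetric])
  also have "- eta * (\<Sum>t\<in>{1..T}. mh t i x) + - eta * mh (Suc T) i x = - eta * (\<Sum>t\<in>{1..Suc T}. mh t i x)"
    by (simp add: algebra_simps)
  finally show ?case .
qed

theorem mainTheorem3:
  fixes M :: "'a measure" and n T :: nat and \<nu> :: real
    and mh :: "nat \<Rightarrow> nat \<Rightarrow> 'a \<Rightarrow> real"
  assumes "prob_space M"
    and "n \<ge> 2"
    and "ln (real n) \<le> real T"
    and "0 \<le> \<nu>" and "\<nu> \<le> 1"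
    and meas: "\<And>t i. t \<in> {1..T} \<Longrightarrow> i \<in> {1..n} \<Longrightarrow> mh t i \<in> borel_measurable M"
    and integ: "\<And>t i. t \<in> {1..T} \<Longrightarrow> i \<in> {1..n} \<Longrightarrow> integrable M (mh t i)"
    and bounded: "\<And>t i. t \<in> {1..T} \<Longrightarrow> i \<in> {1..n} \<Longrightarrow>
        AE x in M. \<bar>cond_mean M n mh t i x\<bar> \<le> 1"
    and subg_int: "\<And>t i s. t \<in> {1..T} \<Longrightarrow> i \<in> {1..n} \<Longrightarrow>
        integrable M (\<lambda>x. exp (s * (mh t i x - cond_mean M n mh t i x)))"
    and subg: "\<And>t i s. t \<in> {1..T} \<Longrightarrow> i \<in> {1..n} \<Longrightarrow>
        AE x in M. real_cond_exp M (past_sigma M n mh t)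
            (\<lambda>x. exp (s * (mh t i x - cond_mean M n mh t i x))) x
          \<le> exp (s\<^sup>2 * \<nu>\<^sup>2 / 2)"
    and "i \<in> {1..n}"
  shows "(\<integral>x. (\<Sum>t\<in>{1..T}. \<Sum>j\<in>{1..n}.
              cond_mean M n mh t j x * hedge_p n (sqrt (ln (real n) / real T)) mh t j x) \<partial>M)
         \<le> (\<integral>x. (\<Sum>t\<in>{1..T}. cond_mean M n mh t i x) \<partial>M) + 4 * sqrt (real T * ln (real n))"
proof -
  interpret P: prob_space M by fact
  define \<eta> where "\<eta> = sqrt (ln (real n) / real T)"
  define a where "a = \<eta>\<^sup>2 * \<nu>\<^sup>2 / 2"
  define F where "F = past_sigma M n mh"
  define cm where "cm = cond_mean M n mh"
  define w where "w = hedge_w \<eta> mh"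
  define q where "q = (\<lambda>t j x. w t j x * exp (- \<eta> * cm t j x) / (exp a * (\<Sum>k\<in>{1..n}. w t k x * exp (- \<eta> * cm t k x))))"
  define X where "X = (\<lambda>t j x. exp ((- \<eta>) * (mh t j x - cm t j x)))"
  define p where "p = hedge_p n \<eta> mh"
  have lnpos: "ln (real n) > 0" using assms(2) by simp
  have Tpos: "real T > 0" using lnpos assms(3) by linarith
  have eta_pos: "\<eta> > 0" unfolding \<eta>_def using lnpos Tpos by simp
  have eta_le: "\<eta> \<le> 1" unfolding \<eta>_def using lnpos Tpos assms(3) by (simp add: divide_le_eq_1)
  have a_le: "a \<le> \<eta>\<^sup>2 / 2"
  proof -
    have "\<nu>\<^sup>2 \<le> 1" using assms(4,5) by (simp add: power_le_one)
    hence "\<eta>\<^sup>2 * \<nu>\<^sup>2 \<le> \<eta>\<^sup>2 * 1" by (intro mult_left_mono) auto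
    thus ?thesis unfolding a_def by simp
  qed
  have subalg: "subalgebra M (F t)" if "t \<in> {1..T}" for t
    unfolding F_def using that by (intro past_sigma_subalg meas) auto
  have sfs: "sigma_finite_subalgebra M (F t)" if "t \<in> {1..T}" for t
    by (rule finite_measure_subalgebra_is_sigma_finite)
       (simp add: finite_measure_subalgebra_def finite_measure_subalgebra_axioms_def subalg[OF that] P.finite_measure_axioms)
  have wF: "w t j \<in> borel_measurable (F t)" if "t \<in> {1..T}" "j \<in> {1..n}" for t j
    unfolding w_def F_def using that by (intro hedge_w_past_meas) auto
  have wM: "w t j \<in> borel_measurable M" if "t \<in> {1..T}" "j \<in> {1..n}" for t j
    using measurable_from_subalg[OF subalg wF] that by auto
  have wpos: "w t j x > 0" for t j x unfolding w_def by (rule hedge_w_pos)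
  have cmF: "cm t j \<in> borel_measurable (F t)" for t j
    unfolding cm_def F_def cond_mean_def by (rule borel_measurable_cond_exp)
  have cmM: "cm t j \<in> borel_measurable M" for t j
    unfolding cm_def F_def cond_mean_def by (rule borel_measurable_cond_exp2)
  have cm_int: "integrable M (cm t j)" "(\<integral>x. cm t j x \<partial>M) = (\<integral>x. mh t j x \<partial>M)"
    if "t \<in> {1..T}" "j \<in> {1..n}" for t j
  proof -
    interpret S: sigma_finite_subalgebra M "F t" using sfs that by auto
    show "integrable M (cm t j)" "(\<integral>x. cm t j x \<partial>M) = (\<integral>x. mh t j x \<partial>M)"
      unfolding cm_def cond_mean_def F_def[symmetric] using S.real_cond_exp_int integ that by auto
  qed
  have qF: "q t j \<in> borel_measurable (F t)" if "t \<in> {1..T}" "j \<in> {1..n}" for t j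
  proof -
    have [measurable]: "w t k \<in> borel_measurable (F t)" if "k \<in> {1..n}" for k using wF that \<open>t \<in> {1..T}\<close> by auto
    note [measurable] = cmF
    show ?thesis unfolding q_def using that by measurable
  qed
  have qM: "q t j \<in> borel_measurable M" if "t \<in> {1..T}" "j \<in> {1..n}" for t j
    using measurable_from_subalg[OF subalg qF] that by auto
  have Spos: "(\<Sum>k\<in>{1..n}. w t k x * exp (- \<eta> * cm t k x)) > 0" for t x
    using assms(2) wpos by (intro sum_pos) auto
  have q_nonneg: "q t j x \<ge> 0" for t j x unfolding q_def using wpos Spos
    by (intro divide_nonneg_pos) (auto intro: less_imp_le)
  have q_sum: "(\<Sum>j\<in>{1..n}. q t j x) = exp (- a)" for t x
  proof -
    have "(\<Sum>j\<in>{1..n}. q t j x) = (\<Sum>j\<in>{1..n}. w t j x * exp (- \<eta> * cm t j x)) / (exp a * (\<Sum>k\<in>{1..n}. w t k x * exp (- \<eta> * cm t k x)))"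
      unfolding q_def by (rule sum_divide_distrib[symmetric])
    also have "\<dots> = 1 / exp a" using Spos[of t x] by simp
    finally show ?thesis by (simp add: exp_minus inverse_eq_divide)
  qed
  have q_le1: "q t j x \<le> 1" if "j \<in> {1..n}" for t j x
  proof -
    have "q t j x \<le> (\<Sum>j\<in>{1..n}. q t j x)" using that q_nonneg by (intro member_le_sum) auto
    also have "\<dots> \<le> 1" using q_sum a_def by simp
    finally show ?thesis .
  qed
  have X_int: "integrable M (X t j)" if "t \<in> {1..T}" "j \<in> {1..n}" for t j
    unfolding X_def cm_def using subg_int that by blast
  have XM: "X t j \<in> borel_measurable M" if "t \<in> {1..T}" "j \<in> {1..n}" for t j
    using X_int[OF that] by auto
  have qX_int: "integrable M (\<lambda>x. q t j x * X t j x)" if "t \<in> {1..T}" "j \<in> {1..n}" for t j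
  proof (rule Bochner_Integration.integrable_bound[OF X_int[OF that]])
    show "(\<lambda>x. q t j x * X t j x) \<in> borel_measurable M" using qM XM that by auto
    show "AE x in M. norm (q t j x * X t j x) \<le> norm (X t j x)"
      using q_nonneg q_le1 that by (auto simp: X_def abs_mult intro!: mult_left_le_one_le)
  qed
  have q_int: "integrable M (q t j)" if "t \<in> {1..T}" "j \<in> {1..n}" for t j
  proof (rule Bochner_Integration.integrable_bound[of _ "\<lambda>x. 1"])
    show "q t j \<in> borel_measurable M" using qM that by auto
    show "AE x in M. norm (q t j x) \<le> norm (1::real)" using q_nonneg q_le1 that by auto
  qed simp
  have qX_le: "(\<integral>x. q t j x * X t j x \<partial>M) \<le> exp a * (\<integral>x. q t j x \<partial>M)"
    if "t \<in> {1..T}" "j \<in> {1..n}" for t j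
  proof -
    interpret S: sigma_finite_subalgebra M "F t" using sfs that by auto
    note R = S.real_cond_exp_intg[OF qX_int[OF that] qF[OF that] XM[OF that]]
    have "(\<integral>x. q t j x * X t j x \<partial>M) = (\<integral>x. q t j x * real_cond_exp M (F t) (X t j) x \<partial>M)"
      using R(2) by simp
    also have "\<dots> \<le> (\<integral>x. q t j x * exp a \<partial>M)"
    proof (rule integral_mono_AE[OF R(1)])
      show "integrable M (\<lambda>x. q t j x * exp a)" using q_int[OF that] by auto
      have "AE x in M. real_cond_exp M (F t) (X t j) x \<le> exp ((- \<eta>)\<^sup>2 * \<nu>\<^sup>2 / 2)"
        unfolding X_def cm_def F_def using subg that by blast
      thus "AE x in M. q t j x * real_cond_exp M (F t) (X t j) x \<le> q t j x * exp a"
        by eventually_elim (auto simp: a_def intro: mult_left_mono q_nonneg)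
    qed
    also have "\<dots> = exp a * (\<integral>x. q t j x \<partial>M)" by simp
    finally show ?thesis .
  qed
  have sum_qX: "(\<integral>x. (\<Sum>j\<in>{1..n}. q t j x * X t j x) \<partial>M) \<le> 1" if "t \<in> {1..T}" for t
  proof -
    have "(\<integral>x. (\<Sum>j\<in>{1..n}. q t j x * X t j x) \<partial>M) = (\<Sum>j\<in>{1..n}. (\<integral>x. q t j x * X t j x \<partial>M))"
      using qX_int that by (subst Bochner_Integration.integral_sum) auto
    also have "\<dots> \<le> (\<Sum>j\<in>{1..n}. exp a * (\<integral>x. q t j x \<partial>M))"
      using qX_le that by (intro sum_mono) auto
    also have "\<dots> = exp a * (\<integral>x. (\<Sum>j\<in>{1..n}. q t j x) \<partial>M)"
      using q_int that by (simp add: sum_distrib_left Bochner_Integration.integral_sum)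
    also have "\<dots> = 1" unfolding q_sum by (simp add: exp_minus P.prob_space)
    finally show ?thesis .
  qed
  have p_eq: "p t j x = w t j x / (\<Sum>k\<in>{1..n}. w t k x)" for t j x
    unfolding p_def hedge_p_def w_def by simp
  have Wpos: "(\<Sum>k\<in>{1..n}. w t k x) > 0" for t x using assms(2) wpos by (intro sum_pos) auto
  have p_nonneg: "p t j x \<ge> 0" for t j x unfolding p_eq using wpos Wpos by (intro divide_nonneg_pos) (auto intro: less_imp_le)
  have p_le1: "p t j x \<le> 1" if "j \<in> {1..n}" for t j x
  proof -
    have "w t j x \<le> (\<Sum>k\<in>{1..n}. w t k x)" using that wpos by (intro member_le_sum) (auto intro: less_imp_le)
    thus ?thesis unfolding p_eq using Wpos[of t x] by simp
  qed
  have pM: "p t j \<in> borel_measurable M" if "t \<in> {1..T}" "j \<in> {1..n}" for t j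
  proof -
    have [measurable]: "w t k \<in> borel_measurable M" if "k \<in> {1..n}" for k using wM that \<open>t \<in> {1..T}\<close> by auto
    show ?thesis unfolding p_eq[abs_def] using that by measurable
  qed
  have cmp_int: "integrable M (\<lambda>x. cm t j x * p t j x)" if "t \<in> {1..T}" "j \<in> {1..n}" for t j
  proof (rule Bochner_Integration.integrable_bound[OF cm_int(1)[OF that]])
    show "(\<lambda>x. cm t j x * p t j x) \<in> borel_measurable M" using cmM pM that by auto
    show "AE x in M. norm (cm t j x * p t j x) \<le> norm (cm t j x)"
      using p_nonneg p_le1 that by (auto simp: abs_mult intro!: AE_I2 mult_left_le)
  qed
  have AEb: "AE x in M. \<forall>t\<in>{1..T}. \<forall>j\<in>{1..n}. \<bar>cm t j x\<bar> \<le> 1"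
    unfolding cm_def using bounded by (auto intro!: eventually_ball_finite)
  define L where "L = (\<lambda>x. - \<eta> * (\<Sum>t\<in>{1..T}. mh t i x) - ln (real n))"
  define R where "R = (\<lambda>x. \<Sum>t\<in>{1..T}. a + \<eta>\<^sup>2 - \<eta> * (\<Sum>j\<in>{1..n}. cm t j x * p t j x)
                              + (\<Sum>j\<in>{1..n}. q t j x * X t j x) - 1)"
  have pw: "AE x in M. L x \<le> R x"
    using AEb
  proof eventually_elim
    case (elim x)
    define LW where "LW = (\<lambda>t. ln (\<Sum>k\<in>{1..n}. w t k x))"
    have "LW (Suc T) - LW 1 = (\<Sum>t\<in>{1..T}. LW (Suc t) - LW t)"
      by (rule sum_Suc_diff[symmetric]) simp
    also have "\<dots> \<le> (\<Sum>t\<in>{1..T}. a + \<eta>\<^sup>2 - \<eta> * (\<Sum>j\<in>{1..n}. cm t j x * p t j x)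
                              + (\<Sum>j\<in>{1..n}. q t j x * X t j x) - 1)"
    proof (rule sum_mono)
      fix t assume t: "t \<in> {1..T}"
      have ws: "(\<Sum>k\<in>{1..n}. w (Suc t) k x) = (\<Sum>k\<in>{1..n}. w t k x * exp (- \<eta> * mh t k x))"
        using t unfolding w_def by simp
      show "LW (Suc t) - LW t \<le> a + \<eta>\<^sup>2 - \<eta> * (\<Sum>j\<in>{1..n}. cm t j x * p t j x)
                              + (\<Sum>j\<in>{1..n}. q t j x * X t j x) - 1"
        unfolding LW_def ws p_eq q_def X_def
        using step_real[of "{1..n}" "\<lambda>j. w t j x" "\<lambda>j. cm t j x" \<eta> "\<lambda>j. mh t j x" a] assms(2) wpos
          elim t eta_pos eta_le by auto
    qed
    finally have 1: "LW (Suc T) - LW 1 \<le> R x" unfolding R_def .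
    have 2: "LW 1 = ln (real n)" unfolding LW_def w_def by simp
    have "- \<eta> * (\<Sum>t\<in>{1..T}. mh t i x) = ln (w (Suc T) i x)" unfolding w_def hedge_w_final by simp
    also have "\<dots> \<le> LW (Suc T)"
    proof -
      have "w (Suc T) i x \<le> (\<Sum>k\<in>{1..n}. w (Suc T) k x)"
        using wpos \<open>i \<in> {1..n}\<close> by (intro member_le_sum) (auto intro: less_imp_le)
      thus ?thesis unfolding LW_def using wpos[of "Suc T" i x] Wpos[of "Suc T" x] by simp
    qed
    finally show ?case using 1 2 unfolding L_def by linarith
  qed
  have mh_int: "integrable M (mh t i)" if "t \<in> {1..T}" for t using integ that \<open>i \<in> {1..n}\<close> by auto
  have SI: "integrable M (\<lambda>x. \<Sum>t\<in>{1..T}. mh t i x)" by (rule Bochner_Integration.integrable_sum) (use mh_int in auto)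
  hence L_int: "integrable M L" unfolding L_def by auto
  have CPS: "integrable M (\<lambda>x. \<Sum>j\<in>{1..n}. cm t j x * p t j x)" if "t \<in> {1..T}" for t
    by (rule Bochner_Integration.integrable_sum) (use cmp_int that in auto)
  have QXS: "integrable M (\<lambda>x. \<Sum>j\<in>{1..n}. q t j x * X t j x)" if "t \<in> {1..T}" for t
    by (rule Bochner_Integration.integrable_sum) (use qX_int that in auto)
  have Rt_eq: "(\<integral>x. a + \<eta>\<^sup>2 - \<eta> * (\<Sum>j\<in>{1..n}. cm t j x * p t j x)
                              + (\<Sum>j\<in>{1..n}. q t j x * X t j x) - 1 \<partial>M)
     = a + \<eta>\<^sup>2 - \<eta> * (\<integral>x. (\<Sum>j\<in>{1..n}. cm t j x * p t j x) \<partial>M)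
                              + (\<integral>x. (\<Sum>j\<in>{1..n}. q t j x * X t j x) \<partial>M) - 1" if "t \<in> {1..T}" for t
  proof -
    define C where "C = (\<lambda>x. \<Sum>j\<in>{1..n}. cm t j x * p t j x)"
    define B where "B = (\<lambda>x. \<Sum>j\<in>{1..n}. q t j x * X t j x)"
    have iC: "integrable M C" unfolding C_def using CPS that .
    have iB: "integrable M B" unfolding B_def using QXS that .
    have "(\<integral>x. a + \<eta>\<^sup>2 - \<eta> * C x + B x - 1 \<partial>M) = (\<integral>x. (a + \<eta>\<^sup>2 - 1) + (B x - \<eta> * C x) \<partial>M)"
      by (rule Bochner_Integration.integral_cong) auto
    also have "\<dots> = (\<integral>x. (a + \<eta>\<^sup>2 - 1) \<partial>M) + (\<integral>x. B x - \<eta> * C x \<partial>M)"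
      using iB iC by (intro Bochner_Integration.integral_add) auto
    also have "(\<integral>x. B x - \<eta> * C x \<partial>M) = (\<integral>x. B x \<partial>M) - (\<integral>x. \<eta> * C x \<partial>M)"
      using iB iC by (intro Bochner_Integration.integral_diff) auto
    also have "(\<integral>x. \<eta> * C x \<partial>M) = \<eta> * (\<integral>x. C x \<partial>M)" by simp
    also have "(\<integral>x. (a + \<eta>\<^sup>2 - 1) \<partial>M) = a + \<eta>\<^sup>2 - 1" by (simp add: P.prob_space)
    finally show ?thesis unfolding C_def B_def by simp
  qed
  have Rt_int: "integrable M (\<lambda>x. a + \<eta>\<^sup>2 - \<eta> * (\<Sum>j\<in>{1..n}. cm t j x * p t j x)
                              + (\<Sum>j\<in>{1..n}. q t j x * X t j x) - 1)" if "t \<in> {1..T}" for t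
  proof -
    have "integrable M (\<lambda>x. \<Sum>j\<in>{1..n}. cm t j x * p t j x)"
      by (rule Bochner_Integration.integrable_sum) (use cmp_int that in auto)
    moreover have "integrable M (\<lambda>x. \<Sum>j\<in>{1..n}. q t j x * X t j x)"
      by (rule Bochner_Integration.integrable_sum) (use qX_int that in auto)
    ultimately show ?thesis by auto
  qed
  have R_int: "integrable M R" unfolding R_def
    by (rule Bochner_Integration.integrable_sum) (use Rt_int in auto)
  define G where "G = (\<integral>x. (\<Sum>t\<in>{1..T}. \<Sum>j\<in>{1..n}. cm t j x * p t j x) \<partial>M)"
  define A where "A = (\<integral>x. (\<Sum>t\<in>{1..T}. cm t i x) \<partial>M)"
  have IL: "integral\<^sup>L M L = - \<eta> * A - ln (real n)"
  proof -
    have "integral\<^sup>L M L = - \<eta> * (\<Sum>t\<in>{1..T}. \<integral>x. mh t i x \<partial>M) - ln (real n)"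
    proof -
      have "integral\<^sup>L M L = (\<integral>x. - \<eta> * (\<Sum>t\<in>{1..T}. mh t i x) \<partial>M) - (\<integral>x. ln (real n) \<partial>M)"
        unfolding L_def using SI by (intro Bochner_Integration.integral_diff) auto
      also have "(\<integral>x. ln (real n) \<partial>M) = ln (real n)" by (simp add: P.prob_space)
      also have "(\<integral>x. - \<eta> * (\<Sum>t\<in>{1..T}. mh t i x) \<partial>M) = - \<eta> * (\<integral>x. (\<Sum>t\<in>{1..T}. mh t i x) \<partial>M)"
        by simp
      also have "(\<integral>x. (\<Sum>t\<in>{1..T}. mh t i x) \<partial>M) = (\<Sum>t\<in>{1..T}. \<integral>x. mh t i x \<partial>M)"
        by (rule Bochner_Integration.integral_sum) (use mh_int in auto)
      finally show ?thesis .
    qed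
    also have "(\<Sum>t\<in>{1..T}. \<integral>x. mh t i x \<partial>M) = A"
      unfolding A_def using cm_int \<open>i \<in> {1..n}\<close> by (simp add: Bochner_Integration.integral_sum)
    finally show ?thesis .
  qed
  have IR: "integral\<^sup>L M R \<le> real T * (a + \<eta>\<^sup>2) - \<eta> * G"
  proof -
    have "integral\<^sup>L M R = (\<Sum>t\<in>{1..T}. a + \<eta>\<^sup>2 - \<eta> * (\<integral>x. (\<Sum>j\<in>{1..n}. cm t j x * p t j x) \<partial>M)
                              + (\<integral>x. (\<Sum>j\<in>{1..n}. q t j x * X t j x) \<partial>M) - 1)"
      unfolding R_def
      by (subst Bochner_Integration.integral_sum) (use Rt_int Rt_eq in auto)
    also have "\<dots> \<le> (\<Sum>t\<in>{1..T}. a + \<eta>\<^sup>2 - \<eta> * (\<integral>x. (\<Sum>j\<in>{1..n}. cm t j x * p t j x) \<partial>M))"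
      using sum_qX by (intro sum_mono) fastforce
    also have "\<dots> = real T * (a + \<eta>\<^sup>2) - \<eta> * G"
    proof -
      have "G = (\<Sum>t\<in>{1..T}. \<integral>x. (\<Sum>j\<in>{1..n}. cm t j x * p t j x) \<partial>M)"
        unfolding G_def by (rule Bochner_Integration.integral_sum) (use CPS in auto)
      thus ?thesis by (simp add: sum_subtractf sum_distrib_left)
    qed
    finally show ?thesis .
  qed
  have "- \<eta> * A - ln (real n) \<le> real T * (a + \<eta>\<^sup>2) - \<eta> * G"
    using integral_mono_AE[OF L_int R_int pw] IL IR by linarith
  hence "\<eta> * G \<le> \<eta> * A + ln (real n) + real T * (a + \<eta>\<^sup>2)" by linarith
  also have "\<dots> \<le> \<eta> * A + ln (real n) + real T * (3/2 * \<eta>\<^sup>2)"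
    using a_le Tpos by (intro add_left_mono mult_left_mono) auto
  finally have "G \<le> A + ln (real n) / \<eta> + 3/2 * (real T * \<eta>)"
    using eta_pos by (simp add: field_simps power2_eq_square)
  moreover have "ln (real n) / \<eta> = sqrt (real T * ln (real n))"
  proof -
    have "\<eta> * sqrt (real T * ln (real n)) = sqrt (ln (real n) / real T * (real T * ln (real n)))"
      by (simp only: \<eta>_def real_sqrt_mult)
    also have "\<dots> = ln (real n)" using Tpos lnpos by (simp add: power2_eq_square[symmetric])
    finally show ?thesis using eta_pos by (simp add: field_simps)
  qed
  moreover have "real T * \<eta> = sqrt (real T * ln (real n))"
  proof -
    have "real T * \<eta> = sqrt (real T ^ 2 * (ln (real n) / real T))"
    proof -
      have "real T = sqrt (real T ^ 2)" using Tpos by simp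
      hence "real T * \<eta> = sqrt (real T ^ 2) * sqrt (ln (real n) / real T)" unfolding \<eta>_def by simp
      thus ?thesis by (simp only: real_sqrt_mult)
    qed
    also have "real T ^ 2 * (ln (real n) / real T) = real T * ln (real n)"
      using Tpos by (simp add: power2_eq_square)
    finally show ?thesis .
  qed
  moreover have "sqrt (real T * ln (real n)) \<ge> 0" using Tpos lnpos by simp
  ultimately have "G \<le> A + 4 * sqrt (real T * ln (real n))" by linarith
  thus ?thesis unfolding G_def A_def p_def cm_def \<eta>_def[symmetric] .
qed

end
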